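(* Suppose $t=t(n)=\alpha_0(n)+O(1)$ is an integer. Uniformly over all $k\le n/2$ with $k=n/(t-\Theta(1))$, we have (partial derivatives with $t$ held fixed) \[ \frac{\partial}{\partial k}\hat L_0(n,k,t)=\Theta\Big(\frac{\log^3n}{n}\Big),\qquad \frac{\partial}{\partial n}\hat L_0(n,k,t)=-\Theta\Big(\frac{\log^2 n}{n}\Big), \] and \[ \frac{\partial}{\partial k}L_0(n,k,t)=\frac{2}{\log2}\log^2n+O(\log n\log\log n). \]
   Context: $\alpha_0(n)=2\log_2 n-2\log_2\log_2 n+2\log_2(e/2)+1$, $d_i=2^{\binom i2}i!$. For positive integer $t$ and reals $\rho\in(1,t)$, $k>0$: $\tilde L_0(\rho,k,t)=\sup\{\rho\log(\rho k)-\log k-\rho+1-\sum_{i=1}^tp_i\log(p_id_i)\}$, the supremum over $(p_i)_{i=1}^t\in[0,1]^t$ with $\sum_ip_i=1$, $\sum_iip_i=\rho$ (with $0\log0=0$); $\hat L_0(n,k,t)=\tilde L_0(n/k,k,t)$ and $L_0(n,k,t)=k\,\hat L_0(n,k,t)$. Logarithms are natural. *)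

theory Defs
  imports "HOL-Analysis.Analysis"
begin

definition alpha0 :: "real \<Rightarrow> real" where
  "alpha0 n = 2 * log 2 n - 2 * log 2 (log 2 n) + 2 * log 2 (exp 1 / 2) + 1"

definition dd :: "nat \<Rightarrow> real" where
  "dd i = 2 powr (real (i choose 2)) * fact i"

definition plogpd :: "real \<Rightarrow> nat \<Rightarrow> real" where
  "plogpd p i = (if p = 0 then 0 else p * ln (p * dd i))"

definition Ltilde0 :: "real \<Rightarrow> real \<Rightarrow> nat \<Rightarrow> real" where
  "Ltilde0 \<rho> k t = Sup ((\<lambda>p. \<rho> * ln (\<rho> * k) - ln k - \<rho> + 1 - (\<Sum>i=1..t. plogpd (p i) i)) `
      {p :: nat \<Rightarrow> real. (\<forall>i\<in>{1..t}. 0 \<le> p i \<and> p i \<le> 1) \<and> (\<Sum>i=1..t. p i) = 1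
                         \<and> (\<Sum>i=1..t. real i * p i) = \<rho>})"

definition Lhat0 :: "real \<Rightarrow> real \<Rightarrow> nat \<Rightarrow> real" where
  "Lhat0 n k t = Ltilde0 (n / k) k t"

definition L0 :: "real \<Rightarrow> real \<Rightarrow> nat \<Rightarrow> real" where
  "L0 n k t = k * Lhat0 n k t"

end

theory Submission
  imports Defs "HOL-Real_Asymp.Real_Asymp"
begin

definition Zf :: "nat \<Rightarrow> real \<Rightarrow> real" where
  "Zf T s = (\<Sum>i=1..T. exp (s * real i) / dd i)"
definition Nf :: "nat \<Rightarrow> real \<Rightarrow> real" where
  "Nf T s = (\<Sum>i=1..T. real i * (exp (s * real i) / dd i))"
definition Pf :: "nat \<Rightarrow> real \<Rightarrow> real" where
  "Pf T s = (\<Sum>i=1..T. real i ^ 2 * (exp (s * real i) / dd i))"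
definition mf :: "nat \<Rightarrow> real \<Rightarrow> real" where
  "mf T s = Nf T s / Zf T s"
definition qf :: "nat \<Rightarrow> real \<Rightarrow> nat \<Rightarrow> real" where
  "qf T s i = exp (s * real i) / dd i / Zf T s"

lemma dd_pos: "dd i > 0"
  unfolding dd_def by simp

lemma dd_nz [simp]: "dd i \<noteq> 0"
  using dd_pos[of i] by simp

lemma dd_Suc: "dd (Suc i) = 2 ^ i * real (Suc i) * dd i"
proof -
  have c: "real (Suc i choose 2) = real (i choose 2) + real i"
    by (simp add: numeral_2_eq_2)
  have "2 powr real (Suc i choose 2) = 2 powr real (i choose 2) * 2 ^ i"
    by (simp add: c powr_add powr_realpow)
  then show ?thesis unfolding dd_def by (simp add: algebra_simps)
qed

lemma Zf_pos: "T \<ge> 1 \<Longrightarrow> Zf T s > 0"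
  unfolding Zf_def by (intro sum_pos) (auto intro: divide_pos_pos dd_pos)

lemma qf_pos: "T \<ge> 1 \<Longrightarrow> qf T s i > 0"
  unfolding qf_def using Zf_pos dd_pos by (simp add: divide_pos_pos)

lemma qf_sum: assumes T: "T \<ge> 1" shows "(\<Sum>i=1..T. qf T s i) = 1"
proof -
  have "(\<Sum>i=1..T. qf T s i) = Zf T s / Zf T s" unfolding qf_def Zf_def by (rule sum_divide_distrib[symmetric])
  then show ?thesis using Zf_pos[OF T, of s] by simp
qed

lemma qf_mean: "T \<ge> 1 \<Longrightarrow> (\<Sum>i=1..T. real i * qf T s i) = mf T s"
  unfolding qf_def mf_def Nf_def by (simp add: sum_divide_distrib)

lemma qf_le1: "T \<ge> 1 \<Longrightarrow> i \<in> {1..T} \<Longrightarrow> qf T s i \<le> 1"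
proof -
  assume T: "T \<ge> 1" and i: "i \<in> {1..T}"
  have "qf T s i \<le> (\<Sum>j=1..T. qf T s j)"
    using i by (intro member_le_sum) (auto intro: less_imp_le qf_pos T)
  then show ?thesis using qf_sum[OF T] by simp
qed

lemma ln_qf: "T \<ge> 1 \<Longrightarrow> ln (qf T s i * dd i) = s * real i - ln (Zf T s)"
  unfolding qf_def using Zf_pos[of T s] dd_pos[of i]
  by (simp add: ln_div)

lemma gibbs_term:
  assumes "p \<ge> 0" "q > 0" "d > 0"
  shows "- plogpd p i + p * ln (q * dd i) \<le> q - p"
proof (cases "p = 0")
  case True then show ?thesis using assms by (simp add: plogpd_def)
next
  case False
  then have p: "p > 0" using assms by simp
  have "ln (q/p) \<le> q/p - 1" using p assms by (intro ln_le_minus_one) simp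
  then have "p * ln (q/p) \<le> p * (q/p - 1)" using p by (intro mult_left_mono) auto
  also have "\<dots> = q - p" using p by (simp add: field_simps)
  finally have *: "p * ln (q/p) \<le> q - p" .
  have "ln (q * dd i) - ln (p * dd i) = ln (q/p)"
    using p assms dd_pos[of i] by (simp add: ln_mult ln_div)
  then show ?thesis using * p unfolding plogpd_def
    by (simp add: right_diff_distrib[symmetric])
qed

lemma gibbs:
  assumes T: "T \<ge> 1" and p0: "\<forall>i\<in>{1..T}. 0 \<le> p i" and p1: "(\<Sum>i=1..T. p i) = 1"
    and pm: "(\<Sum>i=1..T. real i * p i) = \<rho>"
  shows "- (\<Sum>i=1..T. plogpd (p i) i) \<le> ln (Zf T s) - s * \<rho>"
proof -
  have "(\<Sum>i=1..T. - plogpd (p i) i + p i * ln (qf T s i * dd i)) \<le> (\<Sum>i=1..T. qf T s i - p i)"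
    using p0 by (intro sum_mono gibbs_term) (auto intro: qf_pos T)
  also have "\<dots> = 0" using qf_sum[OF T] p1 by (simp add: sum_subtractf)
  finally have *: "(\<Sum>i=1..T. - plogpd (p i) i + p i * ln (qf T s i * dd i)) \<le> 0" .
  have "(\<Sum>i=1..T. - plogpd (p i) i + p i * ln (qf T s i * dd i))
      = - (\<Sum>i=1..T. plogpd (p i) i) + (\<Sum>i=1..T. p i * (s * real i - ln (Zf T s)))"
    by (simp only: sum.distrib sum_negf ln_qf[OF T])
  also have "(\<Sum>i=1..T. p i * (s * real i - ln (Zf T s))) = s * \<rho> - ln (Zf T s)"
    using p1 pm by (simp add: right_diff_distrib sum_subtractf sum_distrib_left[symmetric]
        sum_distrib_right[symmetric] algebra_simps)
  finally show ?thesis using * by simp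
qed

lemma gibbs_eq:
  assumes T: "T \<ge> 1"
  shows "- (\<Sum>i=1..T. plogpd (qf T s i) i) = ln (Zf T s) - s * mf T s"
proof -
  have "(\<Sum>i=1..T. plogpd (qf T s i) i) = (\<Sum>i=1..T. qf T s i * (s * real i - ln (Zf T s)))"
    using qf_pos[OF T] by (intro sum.cong) (auto simp: plogpd_def ln_qf[OF T] less_imp_neq[symmetric])
  also have "\<dots> = s * mf T s - ln (Zf T s)"
    using qf_sum[OF T, of s] qf_mean[OF T, of s]
    by (simp add: right_diff_distrib sum_subtractf sum_distrib_left[symmetric]
        sum_distrib_right[symmetric] algebra_simps)
  finally show ?thesis by simp
qed


lemma Ltilde0_eq:
  assumes T: "T \<ge> 1" and m: "mf T s = \<rho>"
  shows "Ltilde0 \<rho> k T = \<rho> * ln (\<rho> * k) - ln k - \<rho> + 1 + (ln (Zf T s) - s * \<rho>)"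
  unfolding Ltilde0_def
proof (rule cSup_eq_maximum)
  let ?S = "{p :: nat \<Rightarrow> real. (\<forall>i\<in>{1..T}. 0 \<le> p i \<and> p i \<le> 1) \<and> (\<Sum>i=1..T. p i) = 1
                         \<and> (\<Sum>i=1..T. real i * p i) = \<rho>}"
  have qS: "qf T s \<in> ?S"
    using qf_pos[OF T] qf_le1[OF T] qf_sum[OF T] qf_mean[OF T] m by (auto intro: less_imp_le)
  have qv: "\<rho> * ln (\<rho> * k) - ln k - \<rho> + 1 + (ln (Zf T s) - s * \<rho>) = \<rho> * ln (\<rho> * k) - ln k - \<rho> + 1 - (\<Sum>i=1..T. plogpd (qf T s i) i)"
    using gibbs_eq[OF T, of s] m by simp
  have "\<rho> * ln (\<rho> * k) - ln k - \<rho> + 1 - (\<Sum>i=1..T. plogpd (qf T s i) i)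
       = \<rho> * ln (\<rho> * k) - ln k - \<rho> + 1 + (ln (Zf T s) - s * \<rho>)"
    using gibbs_eq[OF T, of s] m by simp
  show "\<rho> * ln (\<rho> * k) - ln k - \<rho> + 1 + (ln (Zf T s) - s * \<rho>)
     \<in> (\<lambda>p. \<rho> * ln (\<rho> * k) - ln k - \<rho> + 1 - (\<Sum>i=1..T. plogpd (p i) i)) ` ?S"
    by (subst qv, rule imageI, rule qS)
  fix x assume "x \<in> (\<lambda>p. \<rho> * ln (\<rho> * k) - ln k - \<rho> + 1 - (\<Sum>i=1..T. plogpd (p i) i)) ` ?S"
  then obtain p where p: "p \<in> ?S" and x: "x = \<rho> * ln (\<rho> * k) - ln k - \<rho> + 1 - (\<Sum>i=1..T. plogpd (p i) i)"
    by blast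
  have "- (\<Sum>i=1..T. plogpd (p i) i) \<le> ln (Zf T s) - s * \<rho>"
    using p by (intro gibbs[OF T]) auto
  then show "x \<le> \<rho> * ln (\<rho> * k) - ln k - \<rho> + 1 + (ln (Zf T s) - s * \<rho>)"
    using x by simp
qed

lemma dual_ineq:
  assumes T: "T \<ge> 1" and m: "mf T s = \<rho>"
  shows "ln (Zf T s) - s * \<rho> \<le> ln (Zf T s') - s' * \<rho>"
proof -
  have "- (\<Sum>i=1..T. plogpd (qf T s i) i) \<le> ln (Zf T s') - s' * \<rho>"
    using qf_pos[OF T] qf_sum[OF T] qf_mean[OF T] m by (intro gibbs[OF T]) (auto intro: less_imp_le)
  then show ?thesis using gibbs_eq[OF T, of s] m by simp
qed

lemma Zf_deriv: "(Zf T has_real_derivative Nf T s) (at s)"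
  unfolding Zf_def Nf_def
  by (auto intro!: derivative_eq_intros DERIV_sum simp: algebra_simps)

lemma Nf_deriv: "(Nf T has_real_derivative Pf T s) (at s)"
  unfolding Pf_def Nf_def
  by (auto intro!: derivative_eq_intros DERIV_sum simp: algebra_simps power2_eq_square)

lemma mf_deriv:
  assumes T: "T \<ge> 1"
  shows "(mf T has_real_derivative (Pf T s / Zf T s - (mf T s)^2)) (at s)"
proof -
  have "((\<lambda>s. Nf T s / Zf T s) has_real_derivative
      (Pf T s * Zf T s - Nf T s * Nf T s) / (Zf T s * Zf T s)) (at s)"
    using Zf_pos[OF T, of s] by (intro DERIV_divide Nf_deriv Zf_deriv) auto
  moreover have "(Pf T s * Zf T s - Nf T s * Nf T s) / (Zf T s * Zf T s) = Pf T s / Zf T s - (mf T s)^2"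
    using Zf_pos[OF T, of s] by (simp add: mf_def field_simps power2_eq_square)
  ultimately show ?thesis unfolding mf_def[abs_def] by simp
qed

lemma variance_pos:
  assumes T: "T \<ge> 2"
  shows "Pf T s / Zf T s - (mf T s)^2 > 0"
proof -
  have T1: "T \<ge> 1" using T by simp
  have sq: "(\<Sum>i=1..T. real i ^ 2 * qf T s i) = Pf T s / Zf T s"
    unfolding qf_def Pf_def by (simp add: sum_divide_distrib)
  have "(\<Sum>i=1..T. qf T s i * (real i - mf T s)^2)
      = (\<Sum>i=1..T. real i ^ 2 * qf T s i) - 2 * mf T s * (\<Sum>i=1..T. real i * qf T s i)
        + (mf T s)^2 * (\<Sum>i=1..T. qf T s i)"
  proof -
    have "(\<Sum>i=1..T. qf T s i * (real i - mf T s)^2)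
       = (\<Sum>i=1..T. real i ^ 2 * qf T s i - 2 * mf T s * (real i * qf T s i) + (mf T s)^2 * qf T s i)"
      by (intro sum.cong) (simp_all add: power2_eq_square algebra_simps)
    also have "\<dots> = (\<Sum>i=1..T. real i ^ 2 * qf T s i) - 2 * mf T s * (\<Sum>i=1..T. real i * qf T s i)
        + (mf T s)^2 * (\<Sum>i=1..T. qf T s i)"
      by (simp only: sum.distrib sum_subtractf sum_distrib_left)
    finally show ?thesis .
  qed
  also have "\<dots> = Pf T s / Zf T s - (mf T s)^2"
    using sq qf_mean[OF T1, of s] qf_sum[OF T1, of s] by (simp add: power2_eq_square)
  finally have eq: "(\<Sum>i=1..T. qf T s i * (real i - mf T s)^2) = Pf T s / Zf T s - (mf T s)^2" .
  obtain j where j: "j \<in> {1..T}" "real j \<noteq> mf T s"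
  proof (cases "mf T s = 1")
    case True then show ?thesis using that[of 2] T by auto
  next
    case False then show ?thesis using that[of 1] T by auto
  qed
  have "(\<Sum>i=1..T. qf T s i * (real i - mf T s)^2) > 0"
  proof (rule sum_pos2[where i=j])
    show "0 < qf T s j * (real j - mf T s)^2"
      using j qf_pos[OF T1, of s j] by (intro mult_pos_pos) auto
    show "\<And>i. i \<in> {1..T} \<Longrightarrow> 0 \<le> qf T s i * (real i - mf T s)^2"
      using qf_pos[OF T1] by (intro mult_nonneg_nonneg) (auto intro: less_imp_le)
  qed (use j in auto)
  then show ?thesis using eq by simp
qed

lemma mf_strict_mono:
  assumes T: "T \<ge> 2" and "a < b"
  shows "mf T a < mf T b"
proof (rule DERIV_pos_imp_increasing[OF assms(2)])
  fix x show "\<exists>y. (mf T has_real_derivative y) (at x) \<and> y > 0"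
    using mf_deriv[of T x] variance_pos[OF T, of x] T by auto
qed

lemma mf_isCont: "T \<ge> 1 \<Longrightarrow> isCont (mf T) x"
  by (rule DERIV_isCont[OF mf_deriv])

lemma mf_cont: "T \<ge> 1 \<Longrightarrow> continuous_on A (mf T)"
  by (intro continuous_at_imp_continuous_on ballI mf_isCont)


definition solf :: "nat \<Rightarrow> real \<Rightarrow> real" where
  "solf T \<rho> = (THE s. mf T s = \<rho>)"

definition Gf :: "nat \<Rightarrow> real \<Rightarrow> real" where
  "Gf T \<rho> = ln (Zf T (solf T \<rho>)) - solf T \<rho> * \<rho>"

lemma solf_eq:
  assumes T: "T \<ge> 2" and m: "mf T s = \<rho>"
  shows "solf T \<rho> = s"
  unfolding solf_def
proof (rule the_equality)
  show "mf T s = \<rho>" by fact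
  fix s' assume s': "mf T s' = \<rho>"
  show "s' = s"
  proof (rule ccontr)
    assume "s' \<noteq> s"
    then have "s' < s \<or> s < s'" by auto
    then show False using mf_strict_mono[OF T, of s' s] mf_strict_mono[OF T, of s s'] s' m by auto
  qed
qed

lemma exists_sol:
  assumes T: "T \<ge> 2" and "mf T a \<le> \<rho>" "\<rho> \<le> mf T b" "a \<le> b"
  shows "\<exists>s. a \<le> s \<and> s \<le> b \<and> mf T s = \<rho>"
  by (rule IVT') (use assms mf_cont[of T] in auto)

lemma sol_near:
  assumes T: "T \<ge> 2" and m: "mf T s0 = \<rho>0" and e: "e > 0"
  shows "\<forall>\<^sub>F \<rho> in nhds \<rho>0. \<exists>s. s0 - e \<le> s \<and> s \<le> s0 + e \<and> mf T s = \<rho>"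
proof -
  have "\<rho>0 \<in> {mf T (s0 - e) <..< mf T (s0 + e)}"
    using m mf_strict_mono[OF T, of "s0 - e" s0] mf_strict_mono[OF T, of s0 "s0 + e"] e by auto
  then have "\<forall>\<^sub>F \<rho> in nhds \<rho>0. \<rho> \<in> {mf T (s0 - e) <..< mf T (s0 + e)}"
    by (intro eventually_nhds_in_open) auto
  then show ?thesis
  proof (rule eventually_mono)
    fix \<rho> assume "\<rho> \<in> {mf T (s0 - e) <..< mf T (s0 + e)}"
    then show "\<exists>s. s0 - e \<le> s \<and> s \<le> s0 + e \<and> mf T s = \<rho>"
      using e by (intro exists_sol[OF T]) auto
  qed
qed

lemma solf_tendsto:
  assumes T: "T \<ge> 2" and m: "mf T s0 = \<rho>0"
  shows "(solf T \<longlongrightarrow> s0) (at \<rho>0)"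
proof (rule tendstoI)
  fix \<epsilon> :: real assume \<epsilon>: "\<epsilon> > 0"
  have "\<forall>\<^sub>F \<rho> in nhds \<rho>0. \<exists>s. s0 - \<epsilon>/2 \<le> s \<and> s \<le> s0 + \<epsilon>/2 \<and> mf T s = \<rho>"
    using \<epsilon> by (intro sol_near[OF T m]) auto
  then have "\<forall>\<^sub>F \<rho> in nhds \<rho>0. dist (solf T \<rho>) s0 < \<epsilon>"
  proof (rule eventually_mono)
    fix \<rho> assume "\<exists>s. s0 - \<epsilon>/2 \<le> s \<and> s \<le> s0 + \<epsilon>/2 \<and> mf T s = \<rho>"
    then obtain s where s: "s0 - \<epsilon>/2 \<le> s" "s \<le> s0 + \<epsilon>/2" "mf T s = \<rho>" by blast
    then have "solf T \<rho> = s" using solf_eq[OF T] by blast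
    then show "dist (solf T \<rho>) s0 < \<epsilon>" using s \<epsilon> by (simp add: dist_real_def abs_if)
  qed
  then show "\<forall>\<^sub>F \<rho> in at \<rho>0. dist (solf T \<rho>) s0 < \<epsilon>"
    by (simp add: eventually_at_filter eventually_mono)
qed

lemma quot_bound:
  fixes \<Delta> h s s0 :: real
  assumes "\<Delta> + s0 * h \<le> 0" "\<Delta> + s * h \<ge> 0" "h \<noteq> 0"
  shows "\<bar>\<Delta> / h - (- s0)\<bar> \<le> \<bar>s - s0\<bar>"
proof (cases "h > 0")
  case True
  then have "\<Delta> / h \<le> - s0" "\<Delta> / h \<ge> - s" using assms by (auto simp: field_simps)
  then show ?thesis by linarith
next
  case False
  then have h: "h < 0" using assms by simp
  then have "\<Delta> / h \<ge> - s0" "\<Delta> / h \<le> - s" using assms by (auto simp: field_simps)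
  then show ?thesis by linarith
qed

lemma Gf_deriv:
  assumes T: "T \<ge> 2" and m: "mf T s0 = \<rho>0"
  shows "(Gf T has_real_derivative (- s0)) (at \<rho>0)"
  unfolding has_field_derivative_iff
proof -
  have T1: "T \<ge> 1" using T by simp
  have sol0: "solf T \<rho>0 = s0" using solf_eq[OF T m] .
  have ev: "\<forall>\<^sub>F \<rho> in at \<rho>0. norm ((Gf T \<rho> - Gf T \<rho>0) / (\<rho> - \<rho>0) - (- s0)) \<le> \<bar>solf T \<rho> - s0\<bar>"
  proof -
    have "\<forall>\<^sub>F \<rho> in nhds \<rho>0. \<exists>s. s0 - 1 \<le> s \<and> s \<le> s0 + 1 \<and> mf T s = \<rho>"
      by (intro sol_near[OF T m]) auto
    then have "\<forall>\<^sub>F \<rho> in nhds \<rho>0. \<rho> \<noteq> \<rho>0 \<longrightarrow> norm ((Gf T \<rho> - Gf T \<rho>0) / (\<rho> - \<rho>0) - (- s0)) \<le> \<bar>solf T \<rho> - s0\<bar>"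
    proof (rule eventually_mono, intro impI)
      fix \<rho> assume ex: "\<exists>s. s0 - 1 \<le> s \<and> s \<le> s0 + 1 \<and> mf T s = \<rho>" and ne: "\<rho> \<noteq> \<rho>0"
      then obtain s where s: "mf T s = \<rho>" by blast
      have sol: "solf T \<rho> = s" using solf_eq[OF T s] .
      have d1: "ln (Zf T s) - s * \<rho> \<le> ln (Zf T s0) - s0 * \<rho>" using dual_ineq[OF T1 s] .
      have d2: "ln (Zf T s0) - s0 * \<rho>0 \<le> ln (Zf T s) - s * \<rho>0" using dual_ineq[OF T1 m] .
      have G1: "Gf T \<rho> = ln (Zf T s) - s * \<rho>" unfolding Gf_def sol ..
      have G0: "Gf T \<rho>0 = ln (Zf T s0) - s0 * \<rho>0" unfolding Gf_def sol0 ..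
      have "\<bar>(Gf T \<rho> - Gf T \<rho>0) / (\<rho> - \<rho>0) - (- s0)\<bar> \<le> \<bar>s - s0\<bar>"
        by (rule quot_bound) (use d1 d2 ne in \<open>auto simp: G1 G0 algebra_simps\<close>)
      then show "norm ((Gf T \<rho> - Gf T \<rho>0) / (\<rho> - \<rho>0) - (- s0)) \<le> \<bar>solf T \<rho> - s0\<bar>"
        by (simp add: sol)
    qed
    then show ?thesis by (simp add: eventually_at_filter)
  qed
  have "((\<lambda>\<rho>. \<bar>solf T \<rho> - s0\<bar>) \<longlongrightarrow> 0) (at \<rho>0)"
    using solf_tendsto[OF T m] by (simp add: tendsto_rabs_zero LIM_zero)
  then have "((\<lambda>\<rho>. (Gf T \<rho> - Gf T \<rho>0) / (\<rho> - \<rho>0) - (- s0)) \<longlongrightarrow> 0) (at \<rho>0)"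
    by (rule Lim_null_comparison[OF ev])
  then show "((\<lambda>\<rho>. (Gf T \<rho> - Gf T \<rho>0) / (\<rho> - \<rho>0)) \<longlongrightarrow> - s0) (at \<rho>0)"
    by (subst LIM_zero_iff[symmetric]) simp
qed


lemma choose2_real: "real (n choose 2) = real n * (real n - 1) / 2"
proof (induction n)
  case 0 then show ?case by simp
next
  case (Suc n)
  have "real (Suc n choose 2) = real (n choose 2) + real n" by (simp add: numeral_2_eq_2)
  then show ?case using Suc by (simp add: field_simps)
qed

lemma dd_ratio:
  assumes K: "K \<ge> 1" and i: "i \<ge> T + 1 - K" "K \<le> i" and T: "T \<ge> 2 * K"
  shows "2 * exp ((real T - 2 * real K) * ln 2 * real K) * dd (i - K) \<le> dd i"
proof -
  define j where "j = i - K"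
  have ij: "i = j + K" using i j_def by simp
  have j: "real j \<ge> real T - 2 * real K + 1" using i T unfolding j_def by linarith
  have e: "exp ((real T - 2 * real K) * ln 2 * real K) = 2 powr ((real T - 2 * real K) * real K)"
    by (simp add: powr_def algebra_simps)
  have expo: "1 + (real T - 2 * real K) * real K + real (j choose 2) \<le> real (i choose 2)"
  proof -
    have "real (i choose 2) - real (j choose 2) = real j * real K + (real K * real K - real K) / 2"
      unfolding choose2_real ij by (simp add: field_simps)
    moreover have "real j * real K \<ge> (real T - 2 * real K + 1) * real K"
      using j by (intro mult_right_mono) auto
    moreover have "real K + (real K * real K - real K) / 2 \<ge> 1"
      using K by (simp add: field_simps) (metis mult_mono' of_nat_0_le_iff of_nat_1 of_nat_le_iff assms(1) mult_1 add_mono one_add_one linorder_not_less not_one_le_zero of_nat_add)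
    ultimately show ?thesis by (simp add: algebra_simps)
  qed
  have "2 * exp ((real T - 2 * real K) * ln 2 * real K) * 2 powr real (j choose 2)
      = 2 powr (1 + (real T - 2 * real K) * real K + real (j choose 2))"
    by (simp add: e powr_add)
  also have "\<dots> \<le> 2 powr real (i choose 2)"
    by (rule powr_mono[OF expo]) auto
  finally have p: "2 * exp ((real T - 2 * real K) * ln 2 * real K) * 2 powr real (j choose 2) \<le> 2 powr real (i choose 2)" .
  have f: "(fact j :: real) \<le> fact i" using ij by (intro fact_mono) auto
  have "2 * exp ((real T - 2 * real K) * ln 2 * real K) * dd j
      = (2 * exp ((real T - 2 * real K) * ln 2 * real K) * 2 powr real (j choose 2)) * fact j"
    unfolding dd_def by (simp add: algebra_simps)
  also have "\<dots> \<le> 2 powr real (i choose 2) * fact i"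
    by (intro mult_mono p f) auto
  finally show ?thesis unfolding dd_def j_def .
qed


lemma mf_lo:
  assumes K: "K \<ge> 1" and T: "T \<ge> 2 * K"
  shows "mf T ((real T - 2 * real K) * ln 2) \<le> real T - real K / 2"
proof -
  define s where "s = (real T - 2 * real K) * ln 2"
  define q where "q = qf T s"
  have T1: "T \<ge> 1" using K T by simp
  have qpos: "\<And>i. q i > 0" unfolding q_def using qf_pos[OF T1] by simp
  have A: "2 * q i \<le> q (i - K)" if i: "i \<in> {T-K+1..T}" for i
  proof -
    have r: "2 * exp (s * real K) * dd (i - K) \<le> dd i"
      unfolding s_def using dd_ratio[OF K _ _ T, of i] i T by auto
    have "real i = real (i - K) + real K" using i T by auto
    then have ei: "exp (s * real i) = exp (s * real (i - K)) * exp (s * real K)"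
      by (simp only: distrib_left exp_add)
    have "2 * (exp (s * real i) / dd i) \<le> exp (s * real (i - K)) / dd (i - K)"
    proof -
      have h1: "2 * exp (s * real K) / dd i \<le> 1 / dd (i - K)"
        using r dd_pos[of i] dd_pos[of "i - K"] by (simp add: field_simps)
      have "exp (s * real (i - K)) * (2 * exp (s * real K) / dd i) \<le> exp (s * real (i - K)) * (1 / dd (i - K))"
        by (intro mult_left_mono h1) auto
      then show ?thesis by (simp add: ei mult.left_commute)
    qed
    then have "2 * (exp (s * real i) / dd i) / Zf T s \<le> exp (s * real (i - K)) / dd (i - K) / Zf T s"
      using Zf_pos[OF T1, of s] by (intro divide_right_mono) auto
    then show ?thesis unfolding q_def qf_def by simp
  qed
  have inj: "inj_on (\<lambda>i. i - K) {T-K+1..T}" using T by (auto simp: inj_on_def)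
  have sub: "(\<lambda>i. i - K) ` {T-K+1..T} \<subseteq> {1..T}" using T K by auto
  have B: "(\<Sum>i=T-K+1..T. q i) \<le> 1/2"
  proof -
    have "(\<Sum>i=T-K+1..T. 2 * q i) \<le> (\<Sum>i=T-K+1..T. q (i - K))"
      by (intro sum_mono A)
    also have "\<dots> = (\<Sum>i\<in>(\<lambda>i. i - K) ` {T-K+1..T}. q i)"
      using sum.reindex[OF inj, of q] by simp
    also have "\<dots> \<le> (\<Sum>i=1..T. q i)"
      by (intro sum_mono2 sub) (auto intro: less_imp_le qpos)
    also have "\<dots> = 1" unfolding q_def using qf_sum[OF T1] .
    finally show ?thesis by (simp add: sum_distrib_left[symmetric])
  qed
  have split: "{1..T} = {1..T-K} \<union> {T-K+1..T}" using T K by auto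
  have disj: "{1..T-K} \<inter> {T-K+1..T} = {}" by auto
  have "real T - mf T s = (\<Sum>i=1..T. (real T - real i) * q i)"
    using qf_sum[OF T1, of s] qf_mean[OF T1, of s] unfolding q_def
    by (simp add: left_diff_distrib sum_subtractf sum_distrib_left[symmetric])
  also have "\<dots> = (\<Sum>i=1..T-K. (real T - real i) * q i) + (\<Sum>i=T-K+1..T. (real T - real i) * q i)"
    unfolding split by (rule sum.union_disjoint) (auto)
  also have "\<dots> \<ge> (\<Sum>i=1..T-K. real K * q i) + 0"
  proof (intro add_mono sum_mono sum_nonneg)
    fix i assume "i \<in> {1..T-K}"
    then have "real T - real i \<ge> real K" using T by auto
    then show "real K * q i \<le> (real T - real i) * q i" using qpos[of i] by (intro mult_right_mono) auto
  next
    fix i assume "i \<in> {T-K+1..T}"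
    then show "0 \<le> (real T - real i) * q i" using qpos[of i] by (intro mult_nonneg_nonneg) auto
  qed
  finally have C: "real T - mf T s \<ge> real K * (\<Sum>i=1..T-K. q i)" by (simp add: sum_distrib_left)
  have "(\<Sum>i=1..T-K. q i) + (\<Sum>i=T-K+1..T. q i) = 1"
    using qf_sum[OF T1, of s] unfolding q_def split by (subst sum.union_disjoint[symmetric]) auto
  then have "(\<Sum>i=1..T-K. q i) \<ge> 1/2" using B by linarith
  then have "real K * (\<Sum>i=1..T-K. q i) \<ge> real K * (1/2)" by (intro mult_left_mono) auto
  then show ?thesis using C unfolding s_def by simp
qed


lemma mf_hi:
  assumes T1: "T \<ge> 1" and d: "0 < \<delta>" "\<delta> \<le> 1/2"
  shows "mf T ((real T - 1) * ln 2 + ln (real T) - ln \<delta>) \<ge> real T - 2 * \<delta>"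
proof -
  define s where "s = (real T - 1) * ln 2 + ln (real T) - ln \<delta>"
  define q where "q = qf T s"
  have qpos: "\<And>i. q i > 0" unfolding q_def using qf_pos[OF T1] by simp
  have es: "exp s = 2 ^ (T - 1) * real T / \<delta>"
  proof -
    have r: "real T - 1 = real (T - 1)" using T1 by simp
    have "exp ((real T - 1) * ln 2) = 2 ^ (T - 1)"
      unfolding r by (simp add: exp_of_nat_mult)
    then show ?thesis unfolding s_def using T1 d by (simp add: exp_diff exp_add)
  qed
  have R: "q i \<le> \<delta> * q (Suc i)" if i: "1 \<le> i" "i < T" for i
  proof -
    have p: "(2::real) ^ i * real (Suc i) \<le> 2 ^ (T - 1) * real T"
      using i by (intro mult_mono power_increasing) auto
    have pos: "(0::real) < 2 ^ i * real (Suc i)" by simp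
    have de: "\<delta> * exp s = 2 ^ (T - 1) * real T" using d by (simp add: es)
    have "\<delta> * exp s / (2 ^ i * real (Suc i)) \<ge> 1"
      unfolding de using p pos by (subst le_divide_eq_1_pos) auto
    then have "exp (s * real i) / dd i * 1 \<le> exp (s * real i) / dd i * (\<delta> * exp s / (2 ^ i * real (Suc i)))"
      using dd_pos[of i] by (intro mult_left_mono) (auto intro: less_imp_le)
    also have "\<dots> = \<delta> * (exp (s * real (Suc i)) / dd (Suc i))"
      by (simp add: dd_Suc distrib_left exp_add field_simps)
    finally have "exp (s * real i) / dd i \<le> \<delta> * (exp (s * real (Suc i)) / dd (Suc i))" by simp
    then have "exp (s * real i) / dd i / Zf T s \<le> \<delta> * (exp (s * real (Suc i)) / dd (Suc i)) / Zf T s"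
      using Zf_pos[OF T1, of s] by (intro divide_right_mono) auto
    then show ?thesis unfolding q_def qf_def by simp
  qed
  define S where "S a = (\<Sum>i=1..a. q i)" for a
  define E where "E a = (\<Sum>i=1..a. (real a - real i) * q i)" for a
  have Snn: "S a \<ge> 0" for a unfolding S_def by (intro sum_nonneg) (auto intro: less_imp_le qpos)
  have main: "a \<le> T \<Longrightarrow> E a \<le> 2 * \<delta> * S a" for a
  proof (induction a)
    case 0 then show ?case by (simp add: E_def S_def)
  next
    case (Suc a)
    have IH: "E a \<le> 2 * \<delta> * S a" using Suc by simp
    have Es: "E (Suc a) = E a + S a"
    proof -
      have "E (Suc a) = (\<Sum>i=1..a. (real (Suc a) - real i) * q i) + (real (Suc a) - real (Suc a)) * q (Suc a)"
        unfolding E_def by simp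
      also have "\<dots> = (\<Sum>i=1..a. (real a - real i) * q i + q i)"
        by (simp add: algebra_simps)
      also have "\<dots> = E a + S a" unfolding E_def S_def by (simp add: sum.distrib)
      finally show ?thesis .
    qed
    have SS: "S a \<le> \<delta> * S (Suc a)"
    proof -
      have "S a \<le> (\<Sum>i=1..a. \<delta> * q (Suc i))"
        unfolding S_def using Suc.prems by (intro sum_mono R) auto
      also have "\<dots> = \<delta> * (\<Sum>i=Suc 1..Suc a. q i)"
        by (simp only: sum.shift_bounds_cl_Suc_ivl sum_distrib_left)
      also have "\<dots> \<le> \<delta> * S (Suc a)"
        unfolding S_def using d by (intro mult_left_mono sum_mono2) (auto intro: less_imp_le qpos)
      finally show ?thesis .
    qed
    have "E (Suc a) \<le> (1 + 2 * \<delta>) * S a" using Es IH by (simp add: algebra_simps)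
    also have "\<dots> \<le> (1 + 2 * \<delta>) * (\<delta> * S (Suc a))"
      using SS d by (intro mult_left_mono) auto
    also have "\<dots> \<le> 2 * \<delta> * S (Suc a)"
    proof -
      have "(1 + 2 * \<delta>) * \<delta> \<le> 2 * \<delta>" using d by (simp add: algebra_simps)
      then show ?thesis using Snn[of "Suc a"] by (metis mult.assoc mult_right_mono)
    qed
    finally show ?case .
  qed
  have "E T = real T - mf T s"
    using qf_sum[OF T1, of s] qf_mean[OF T1, of s] unfolding E_def q_def
    by (simp add: left_diff_distrib sum_subtractf sum_distrib_left[symmetric])
  moreover have "S T = 1" unfolding S_def q_def using qf_sum[OF T1] .
  ultimately show ?thesis using main[of T] unfolding s_def by simp
qed


lemma ln_dd_le: "ln (dd i) \<le> real i * (real i - 1) / 2 * ln 2 + real i * ln (real i)"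
proof (cases "i = 0")
  case True then show ?thesis by (simp add: dd_def numeral_2_eq_2)
next
  case False
  have f: "ln (fact i :: real) \<le> real i * ln (real i)"
  proof -
    have "ln (fact i :: real) \<le> ln (real i ^ i)"
      using fact_le_power[of i, where 'a=real] by (subst ln_le_cancel_iff) auto
    also have "\<dots> = real i * ln (real i)" using False by (simp add: ln_realpow)
    finally show ?thesis .
  qed
  have "ln (dd i) = real (i choose 2) * ln 2 + ln (fact i)"
    unfolding dd_def by (simp add: ln_mult powr_def)
  then show ?thesis using f by (simp add: choose2_real)
qed

lemma lnZ_lo:
  assumes T1: "T \<ge> 1"
  shows "ln (Zf T s) \<ge> s * real T - real T * (real T - 1) / 2 * ln 2 - real T * ln (real T)"
proof -
  have "exp (s * real T) / dd T \<le> Zf T s"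
    unfolding Zf_def using T1 dd_pos by (intro member_le_sum) (auto intro: less_imp_le)
  then have "ln (exp (s * real T) / dd T) \<le> ln (Zf T s)"
    using dd_pos[of T] Zf_pos[OF T1, of s] by (subst ln_le_cancel_iff) auto
  then have "s * real T - ln (dd T) \<le> ln (Zf T s)"
    using dd_pos[of T] by (simp add: ln_div)
  then show ?thesis using ln_dd_le[of T] by simp
qed

lemma lnZ_hi:
  assumes T1: "T \<ge> 1"
  shows "ln (Zf T s) \<le> ln (real T) + (s + ln 2 / 2)^2 / (2 * ln 2)"
proof -
  define M where "M = (s + ln 2 / 2)^2 / (2 * ln 2)"
  have trm: "exp (s * real i) / dd i \<le> exp M" for i
  proof -
    have "2 powr real (i choose 2) \<le> dd i"
      unfolding dd_def using fact_ge_1[of i, where 'a=real] by (simp add: mult_le_cancel_left1)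
    then have "exp (s * real i) / dd i \<le> exp (s * real i) / 2 powr real (i choose 2)"
      using dd_pos[of i] by (intro divide_left_mono) auto
    also have "\<dots> = exp (s * real i - real (i choose 2) * ln 2)"
      by (simp add: powr_def exp_diff)
    also have "\<dots> \<le> exp M"
    proof -
      have "M - (s * real i - real (i choose 2) * ln 2) = (s + ln 2 / 2 - ln 2 * real i)^2 / (2 * ln 2)"
        unfolding M_def choose2_real by (simp add: field_simps power2_eq_square)
      also have "\<dots> \<ge> 0" by simp
      finally show ?thesis by simp
    qed
    finally show ?thesis .
  qed
  have "Zf T s \<le> (\<Sum>i=1..T. exp M)" unfolding Zf_def by (intro sum_mono trm)
  also have "\<dots> = real T * exp M" by simp
  finally have "ln (Zf T s) \<le> ln (real T * exp M)"
    using Zf_pos[OF T1, of s] by (subst ln_le_cancel_iff) auto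
  also have "\<dots> = ln (real T) + M" using T1 by (simp add: ln_mult)
  finally show ?thesis unfolding M_def .
qed


lemma mf_ge1: assumes T1: "T \<ge> 1" shows "mf T s \<ge> 1"
proof -
  have "(\<Sum>i=1..T. qf T s i) \<le> (\<Sum>i=1..T. real i * qf T s i)"
    using qf_pos[OF T1] by (intro sum_mono) (auto intro: mult_right_mono[of 1, simplified] less_imp_le)
  then show ?thesis using qf_sum[OF T1] qf_mean[OF T1] by simp
qed

lemma Ltilde0_Gf:
  assumes T: "T \<ge> 2" and m: "mf T s' = r"
  shows "Ltilde0 r k T = r * ln (r * k) - ln k - r + 1 + Gf T r"
  using Ltilde0_eq[of T s' r k] T m solf_eq[OF T m] unfolding Gf_def by simp

lemma sol_in:
  assumes T: "T \<ge> 2" and "mf T (s - 1) < r" "r < mf T (s + 1)"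
  shows "\<exists>s'. mf T s' = r"
  using exists_sol[OF T, of "s - 1" r "s + 1"] assms by auto

lemma deriv_n:
  assumes T: "T \<ge> 2" and n: "n > 0" and k: "k > 0" and m: "mf T s = n / k"
  shows "((\<lambda>x. Lhat0 x k T) has_real_derivative ((ln n - s) / k)) (at n)"
proof -
  define a where "a = mf T (s - 1)"
  define b where "b = mf T (s + 1)"
  have ab: "a < n / k" "n / k < b"
    unfolding a_def b_def using mf_strict_mono[OF T, of "s - 1" s] mf_strict_mono[OF T, of s "s + 1"] m by auto
  have U: "n \<in> {a * k <..< b * k}" using ab k by (auto simp: field_simps)
  have eq: "(x / k) * ln x - ln k - x / k + 1 + Gf T (x / k) = Lhat0 x k T" if x: "x \<in> {a * k <..< b * k}" for x
  proof -
    have "a < x / k" "x / k < b" using x k by (auto simp: field_simps)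
    then obtain s' where s': "mf T s' = x / k" using sol_in[OF T, of s "x / k"] unfolding a_def b_def by auto
    show ?thesis unfolding Lhat0_def Ltilde0_Gf[OF T s'] using k by simp
  qed
  have d: "((\<lambda>x. (x / k) * ln x - ln k - x / k + 1 + Gf T (x / k)) has_real_derivative
      ((1 / k) * ln n + (n / k) * (1 / n) - 1 / k + (- s) * (1 / k))) (at n)"
  proof -
    have h1: "((\<lambda>x. x / k) has_real_derivative 1 / k) (at n)" using k by (auto intro!: derivative_eq_intros)
    have g: "((\<lambda>x. Gf T (x / k)) has_real_derivative (- s) * (1 / k)) (at n)"
      using DERIV_chain2[of "Gf T" "- s" "\<lambda>x. x / k" n "1 / k" UNIV] Gf_deriv[OF T m] h1 by simp
    show ?thesis using n k by (auto intro!: derivative_eq_intros g simp: field_simps)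
  qed
  have e: "(1 / k) * ln n + (n / k) * (1 / n) - 1 / k + (- s) * (1 / k) = (ln n - s) / k"
    using n k by (simp add: field_simps)
  from DERIV_cong[OF d e] have "((\<lambda>x. (x / k) * ln x - ln k - x / k + 1 + Gf T (x / k)) has_real_derivative ((ln n - s) / k)) (at n)"
    .
  then show ?thesis by (rule has_field_derivative_transform_within_open[OF _ _ U eq]) auto
qed

lemma deriv_k:
  assumes T: "T \<ge> 2" and n: "n > 0" and k: "k > 0" and m: "mf T s = n / k"
  shows "((\<lambda>x. Lhat0 n x T) has_real_derivative ((n / k^2) * (s - ln n + 1) - 1 / k)) (at k)"
proof -
  define a where "a = mf T (s - 1)"
  define b where "b = mf T (s + 1)"
  have ab: "a < n / k" "n / k < b"
    unfolding a_def b_def using mf_strict_mono[OF T, of "s - 1" s] mf_strict_mono[OF T, of s "s + 1"] m by auto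
  have a0: "a > 0" unfolding a_def using mf_ge1[of T "s - 1"] T by simp
  have b0: "b > 0" using a0 ab by linarith
  have U: "k \<in> {n / b <..< n / a}" using ab k a0 b0 n by (auto simp: field_simps)
  have eq: "(n / x) * ln n - ln x - n / x + 1 + Gf T (n / x) = Lhat0 n x T" if x: "x \<in> {n / b <..< n / a}" for x
  proof -
    have x0: "x > 0" using x n b0 by (smt (verit) divide_pos_pos greaterThanLessThan_iff)
    have "a < n / x" "n / x < b" using x x0 a0 b0 n by (auto simp: field_simps)
    then obtain s' where s': "mf T s' = n / x" using sol_in[OF T, of s "n / x"] unfolding a_def b_def by auto
    show ?thesis unfolding Lhat0_def Ltilde0_Gf[OF T s'] using x0 by simp
  qed
  have d: "((\<lambda>x. (n / x) * ln n - ln x - n / x + 1 + Gf T (n / x)) has_real_derivative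
      ((- (n / k^2)) * ln n - 1 / k + n / k^2 + (- s) * (- (n / k^2)))) (at k)"
  proof -
    have h1: "((\<lambda>x. n / x) has_real_derivative - (n / k^2)) (at k)"
      using k by (auto intro!: derivative_eq_intros simp: power2_eq_square)
    have g: "((\<lambda>x. Gf T (n / x)) has_real_derivative (- s) * (- (n / k^2))) (at k)"
      using DERIV_chain2[of "Gf T" "- s" "\<lambda>x. n / x" k "- (n / k^2)" UNIV] Gf_deriv[OF T m] h1 by simp
    show ?thesis using n k
      apply (auto intro!: derivative_eq_intros g)
      apply (simp add: field_simps power2_eq_square)
      done
  qed
  have e: "(- (n / k^2)) * ln n - 1 / k + n / k^2 + (- s) * (- (n / k^2)) = (n / k^2) * (s - ln n + 1) - 1 / k"
    using k by (simp add: field_simps)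
  from DERIV_cong[OF d e] have "((\<lambda>x. (n / x) * ln n - ln x - n / x + 1 + Gf T (n / x)) has_real_derivative ((n / k^2) * (s - ln n + 1) - 1 / k)) (at k)"
    .
  then show ?thesis by (rule has_field_derivative_transform_within_open[OF _ _ U eq]) auto
qed

lemma deriv_L0:
  assumes T: "T \<ge> 2" and n: "n > 0" and k: "k > 0" and m: "mf T s = n / k"
  shows "((\<lambda>x. L0 n x T) has_real_derivative (ln (Zf T s) - ln k)) (at k)"
proof -
  have d: "((\<lambda>x. x * Lhat0 n x T) has_real_derivative 1 * Lhat0 n k T + ((n / k^2) * (s - ln n + 1) - 1 / k) * k) (at k)"
    by (intro DERIV_mult DERIV_ident deriv_k[OF T n k m])
  have "Lhat0 n k T = (n / k) * ln (n / k * k) - ln k - n / k + 1 + (ln (Zf T s) - s * (n / k))"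
    unfolding Lhat0_def using Ltilde0_eq[of T s "n / k" k] T m by simp
  then have "1 * Lhat0 n k T + ((n / k^2) * (s - ln n + 1) - 1 / k) * k = ln (Zf T s) - ln k"
    using k by (simp add: field_simps power2_eq_square)
  then show ?thesis using d unfolding L0_def by simp
qed


lemma ln_ln2_ge: "ln (ln (2::real)) \<ge> -1"
proof -
  have "exp (-1::real) = 1 / exp 1" by (simp add: exp_minus field_simps)
  also have "\<dots> \<le> 1 / 2" using exp_ge_add_one_self[of "1::real"] by (intro divide_left_mono) auto
  also have "\<dots> \<le> ln 2" using ln2_ge_two_thirds by simp
  finally show ?thesis by (subst ln_ge_iff) auto
qed

lemma core:
  fixes n k B ca cb \<delta> L tm tp :: real and T K :: nat
  assumes n: "n > 0" and k: "k > 0" and Ldef: "L = ln n"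
    and tmd: "tm = 2 * L - 2 * ln L - B" and tpd: "tp = 2 * L - 2 * ln L + B"
    and tau: "\<bar>real T * ln 2 - (2 * L - 2 * ln L)\<bar> \<le> B"
    and rho: "ca \<le> real T - n / k" "real T - n / k \<le> cb"
    and K: "K \<ge> 1" "cb < real K / 2"
    and dl: "0 < \<delta>" "\<delta> \<le> 1/2" "2 * \<delta> < ca"
    and R1: "tm - 2 * real K - L + 1 \<ge> L / 2"
    and R2: "tp + ln tp + (1 - ln \<delta>) - L + 1 \<le> 2 * L"
    and R3: "tm - cb \<ge> L"
    and R4: "2 * tp \<le> 6 * L"
    and R5: "L^3 / 2 - 6 * L \<ge> L^3 / 4"
    and R6: "tm^2 / 2 - (2 * real K + 1) * tp - tp * ln tp - L - 2 * L^2 \<ge> - 10 * L * ln L"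
    and R7: "ln tp + 1 + (tp + ln tp + (1 - ln \<delta>) + 1)^2 / 2 + ln (6 * L) - 2 * L^2 \<le> 10 * L * ln L"
    and R8: "tm \<ge> 2 * real K + 2"
    and R10: "L / 2 - 1 \<ge> L / 4"
    and R11: "L \<ge> 3"
  shows "(\<exists>D. ((\<lambda>x. Lhat0 n x T) has_real_derivative D) (at k) \<and>
            1/4 * L ^ 3 / n \<le> D \<and> D \<le> 72 * L ^ 3 / n) \<and>
       (\<exists>D. ((\<lambda>x. Lhat0 x k T) has_real_derivative D) (at n) \<and>
            - 12 * L ^ 2 / n \<le> D \<and> D \<le> - (1/4) * L ^ 2 / n) \<and>
       (\<exists>D. ((\<lambda>x. L0 n x T) has_real_derivative D) (at k) \<and>
            abs (D - 2 / ln 2 * L ^ 2) \<le> 10 / ln 2 * L * ln L)"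
proof -
  define l where "l = ln (2::real)"
  have l0: "2/3 \<le> l" unfolding l_def by (rule ln2_ge_two_thirds)
  have l1: "l < 1" unfolding l_def by (rule ln_2_less_1)
  define \<tau> where "\<tau> = real T * l"
  have tau1: "tm \<le> \<tau>" "\<tau> \<le> tp" using tau tmd tpd unfolding \<tau>_def l_def by auto
  have tmpos: "tm > 0" using R8 by simp
  have Tge: "real T \<ge> \<tau>" unfolding \<tau>_def using l1 by (simp add: mult_left_le)
  have Tle: "real T \<le> 3/2 * \<tau>"
  proof -
    have "real T * (2/3) \<le> real T * l" using l0 by (intro mult_left_mono) auto
    then show ?thesis unfolding \<tau>_def by linarith
  qed
  have TK: "real T \<ge> 2 * real K + 2" using R8 tau1 Tge by linarith
  then have TK': "T \<ge> 2 * K" and T2: "T \<ge> 2" and T1: "T \<ge> 1" by linarith+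
  define \<rho> where "\<rho> = n / k"
  have Kpos: "K \<ge> 1" using K by simp
  define slo where "slo = (real T - 2 * real K) * ln 2"
  define shi where "shi = (real T - 1) * ln 2 + ln (real T) - ln \<delta>"
  have mlo: "mf T slo < \<rho>" using mf_lo[OF Kpos TK'] rho K unfolding slo_def \<rho>_def by linarith
  have mhi: "mf T shi > \<rho>" using mf_hi[OF T1 dl(1) dl(2)] rho dl unfolding shi_def \<rho>_def by linarith
  have slohi: "slo \<le> shi"
  proof (rule ccontr)
    assume "\<not> slo \<le> shi"
    then have "mf T shi < mf T slo" using mf_strict_mono[OF T2] by simp
    then show False using mlo mhi by simp
  qed
  obtain s where s: "slo \<le> s" "s \<le> shi" "mf T s = \<rho>"
    using exists_sol[OF T2, of slo \<rho> shi] mlo mhi slohi by auto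
  have tppos: "tp \<ge> 1" using tau1 tmpos R8 by linarith
  have taupos: "\<tau> > 0" using tau1 tmpos by linarith
  have s_lo: "s \<ge> \<tau> - 2 * real K" and s_lo': "s \<ge> tm - 2 * real K"
  proof -
    have "slo = \<tau> - 2 * real K * l" unfolding slo_def \<tau>_def l_def by (simp add: algebra_simps)
    moreover have "2 * real K * l \<le> 2 * real K" using l1 by (simp add: mult_left_le)
    ultimately show "s \<ge> \<tau> - 2 * real K" using s by linarith
    then show "s \<ge> tm - 2 * real K" using tau1 by linarith
  qed
  have lnT: "ln (real T) \<le> ln tp + 1"
  proof -
    have "real T = \<tau> / l" unfolding \<tau>_def using l0 by simp
    then have "ln (real T) = ln \<tau> - ln l" using taupos l0 by (simp add: ln_div)
    moreover have "ln \<tau> \<le> ln tp" using taupos tau1 by simp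
    moreover have "- ln l \<le> 1" using ln_ln2_ge unfolding l_def by simp
    ultimately show ?thesis by linarith
  qed
  have lnT0: "ln (real T) \<ge> 0" using T1 by simp
  have s_hi: "s \<le> tp + ln tp + (1 - ln \<delta>)"
  proof -
    have "shi = \<tau> - l + ln (real T) - ln \<delta>" unfolding shi_def \<tau>_def l_def by (simp add: algebra_simps)
    then show ?thesis using s lnT tau1 l0 by linarith
  qed
  have rho_lo: "\<rho> \<ge> L" using rho R3 tau1 Tge unfolding \<rho>_def by linarith
  have rho_hi: "\<rho> \<le> 6 * L" using rho Tle tau1 R4 dl unfolding \<rho>_def by linarith
  have Lpos: "L > 0" using R11 by simp
  have rho1: "\<rho> \<ge> 1" using rho_lo R11 by linarith
  define w where "w = s - L + 1"
  have w_lo: "w \<ge> L / 2" unfolding w_def using s_lo' R1 by linarith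
  have w_hi: "w \<le> 2 * L" unfolding w_def using s_hi R2 by linarith
  have nk: "n / k^2 = \<rho>^2 / n" "1 / k = \<rho> / n" unfolding \<rho>_def using n k by (simp_all add: field_simps power2_eq_square)
  have P1: "\<exists>D. ((\<lambda>x. Lhat0 n x T) has_real_derivative D) (at k) \<and>
            1/4 * L ^ 3 / n \<le> D \<and> D \<le> 72 * L ^ 3 / n"
  proof (intro exI conjI)
    show "((\<lambda>x. Lhat0 n x T) has_real_derivative ((n / k^2) * (s - ln n + 1) - 1 / k)) (at k)"
      using deriv_k[OF T2 n k] s(3) unfolding \<rho>_def by simp
    have D: "(n / k^2) * (s - ln n + 1) - 1 / k = (\<rho>^2 * w - \<rho>) / n"
      unfolding nk w_def Ldef by (simp add: diff_divide_distrib)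
    have "\<rho>^2 * w \<ge> L^2 * (L / 2)"
      using rho_lo w_lo Lpos by (intro mult_mono power_mono) auto
    then have "\<rho>^2 * w - \<rho> \<ge> L^3 / 4" using rho_hi R5 by (simp add: power3_eq_cube power2_eq_square)
    then have "1/4 * L ^ 3 \<le> \<rho>^2 * w - \<rho>" by simp
    then show "1/4 * L ^ 3 / n \<le> (n / k^2) * (s - ln n + 1) - 1 / k"
      unfolding D using n by (intro divide_right_mono) auto
    have "\<rho>^2 * w \<le> (6 * L)^2 * (2 * L)"
      using rho_hi rho1 w_hi w_lo Lpos by (intro mult_mono power_mono) auto
    then have "\<rho>^2 * w - \<rho> \<le> 72 * L^3" using rho1 by (simp add: power3_eq_cube power2_eq_square)
    then show "(n / k^2) * (s - ln n + 1) - 1 / k \<le> 72 * L ^ 3 / n"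
      unfolding D using n by (simp add: divide_right_mono)
  qed
  have P2: "\<exists>D. ((\<lambda>x. Lhat0 x k T) has_real_derivative D) (at n) \<and>
            - 12 * L ^ 2 / n \<le> D \<and> D \<le> - (1/4) * L ^ 2 / n"
  proof (intro exI conjI)
    show "((\<lambda>x. Lhat0 x k T) has_real_derivative ((ln n - s) / k)) (at n)"
      using deriv_n[OF T2 n k] s(3) unfolding \<rho>_def by simp
    have D: "(ln n - s) / k = - (\<rho> * (w - 1)) / n"
      unfolding \<rho>_def w_def Ldef using n k by (simp add: field_simps)
    have "\<rho> * (w - 1) \<ge> L * (L / 4)"
      using rho_lo w_lo R10 Lpos by (intro mult_mono) auto
    then have "\<rho> * (w - 1) \<ge> 1/4 * L^2" by (simp add: power2_eq_square)
    then have "1/4 * L^2 / n \<le> \<rho> * (w - 1) / n" using n by (intro divide_right_mono) auto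
    then show "(ln n - s) / k \<le> - (1/4) * L ^ 2 / n"
      unfolding D by simp
    have "\<rho> * (w - 1) \<le> (6 * L) * (2 * L)"
      using rho_hi rho1 w_hi w_lo R10 Lpos by (intro mult_mono) auto
    then have "\<rho> * (w - 1) \<le> 12 * L^2" by (simp add: power2_eq_square)
    then show "- 12 * L ^ 2 / n \<le> (ln n - s) / k"
      unfolding D using n by (simp add: divide_right_mono)
  qed
  have P3: "\<exists>D. ((\<lambda>x. L0 n x T) has_real_derivative D) (at k) \<and>
            abs (D - 2 / ln 2 * L ^ 2) \<le> 10 / ln 2 * L * ln L"
  proof (intro exI conjI)
    show "((\<lambda>x. L0 n x T) has_real_derivative (ln (Zf T s) - ln k)) (at k)"
      using deriv_L0[OF T2 n k] s(3) unfolding \<rho>_def by simp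
    have lnk: "ln k = L - ln \<rho>" unfolding \<rho>_def Ldef using n k by (simp add: ln_div)
    have lnrho0: "ln \<rho> \<ge> 0" using rho1 by simp
    have lnrho: "ln \<rho> \<le> ln (6 * L)" using rho1 rho_hi by simp
    have lntp0: "ln tp \<ge> 0" using tppos by simp
    have lo: "l * ln (Zf T s) \<ge> tm^2 / 2 - (2 * real K + 1) * tp - tp * ln tp"
    proof -
      have "l * ln (Zf T s) \<ge> l * (s * real T - real T * (real T - 1) / 2 * l - real T * ln (real T))"
        using lnZ_lo[OF T1, of s] l0 unfolding l_def by (intro mult_left_mono) auto
      also have "l * (s * real T - real T * (real T - 1) / 2 * l - real T * ln (real T))
          = s * \<tau> - \<tau> * (\<tau> - l) / 2 - \<tau> * ln (real T)"
        unfolding \<tau>_def by (simp add: algebra_simps)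
      also have "\<dots> \<ge> (\<tau> - 2 * real K) * \<tau> - \<tau> * \<tau> / 2 - \<tau> * (ln tp + 1)"
      proof -
        have "s * \<tau> \<ge> (\<tau> - 2 * real K) * \<tau>" using s_lo taupos by (intro mult_right_mono) auto
        moreover have "\<tau> * (\<tau> - l) \<le> \<tau> * \<tau>" using taupos l0 by (intro mult_left_mono) auto
        moreover have "\<tau> * ln (real T) \<le> \<tau> * (ln tp + 1)" using taupos lnT by (intro mult_left_mono) auto
        ultimately show ?thesis by linarith
      qed
      also have "(\<tau> - 2 * real K) * \<tau> - \<tau> * \<tau> / 2 - \<tau> * (ln tp + 1)
          = \<tau>^2 / 2 - (2 * real K + 1) * \<tau> - \<tau> * ln tp"
        by (simp add: algebra_simps power2_eq_square)
      also have "\<dots> \<ge> tm^2 / 2 - (2 * real K + 1) * tp - tp * ln tp"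
      proof -
        have "\<tau>^2 \<ge> tm^2" using tau1 tmpos by (intro power_mono) auto
        moreover have "(2 * real K + 1) * \<tau> \<le> (2 * real K + 1) * tp" using tau1 by (intro mult_left_mono) auto
        moreover have "\<tau> * ln tp \<le> tp * ln tp" using tau1 lntp0 by (intro mult_right_mono) auto
        ultimately show ?thesis by linarith
      qed
      finally show ?thesis .
    qed
    have hi: "l * ln (Zf T s) \<le> ln tp + 1 + (tp + ln tp + (1 - ln \<delta>) + 1)^2 / 2"
    proof -
      have "l * ln (Zf T s) \<le> l * (ln (real T) + (s + l / 2)^2 / (2 * l))"
        using lnZ_hi[OF T1, of s] l0 unfolding l_def by (intro mult_left_mono) auto
      also have "\<dots> = l * ln (real T) + (s + l / 2)^2 / 2"
        using l0 by (simp add: field_simps)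
      also have "\<dots> \<le> ln tp + 1 + (tp + ln tp + (1 - ln \<delta>) + 1)^2 / 2"
      proof -
        have "l * ln (real T) \<le> 1 * ln (real T)" using l1 lnT0 by (intro mult_right_mono) auto
        moreover have "(s + l / 2)^2 \<le> (tp + ln tp + (1 - ln \<delta>) + 1)^2"
          using s_hi s_lo' R8 l0 l1 by (intro power_mono) auto
        ultimately show ?thesis using lnT by linarith
      qed
      finally show ?thesis .
    qed
    have "l * (ln (Zf T s) - ln k) - 2 * L^2 \<ge> - 10 * L * ln L"
    proof -
      have "l * (ln (Zf T s) - ln k) = l * ln (Zf T s) - l * L + l * ln \<rho>"
        unfolding lnk by (simp add: algebra_simps)
      moreover have "l * L \<le> L" using l1 Lpos by simp
      moreover have "l * ln \<rho> \<ge> 0" using l0 lnrho0 by simp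
      ultimately show ?thesis using lo R6 by linarith
    qed
    moreover have "l * (ln (Zf T s) - ln k) - 2 * L^2 \<le> 10 * L * ln L"
    proof -
      have "l * (ln (Zf T s) - ln k) = l * ln (Zf T s) - l * L + l * ln \<rho>"
        unfolding lnk by (simp add: algebra_simps)
      moreover have "l * L \<ge> 0" using l0 Lpos by simp
      moreover have "l * ln \<rho> \<le> ln (6 * L)"
      proof -
        have "l * ln \<rho> \<le> 1 * ln \<rho>" using l1 lnrho0 by (intro mult_right_mono) auto
        then show ?thesis using lnrho by linarith
      qed
      ultimately show ?thesis using hi R7 by linarith
    qed
    ultimately have "\<bar>l * (ln (Zf T s) - ln k) - 2 * L^2\<bar> \<le> 10 * L * ln L" by linarith
    moreover have "l * (ln (Zf T s) - ln k) - 2 * L^2 = l * ((ln (Zf T s) - ln k) - 2 / ln 2 * L^2)"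
      unfolding l_def by (simp add: field_simps)
    ultimately have "l * \<bar>(ln (Zf T s) - ln k) - 2 / ln 2 * L^2\<bar> \<le> 10 * L * ln L"
      using l0 by (simp add: abs_mult)
    then show "\<bar>(ln (Zf T s) - ln k) - 2 / ln 2 * L^2\<bar> \<le> 10 / ln 2 * L * ln L"
      using l0 unfolding l_def by (simp add: field_simps)
  qed
  show ?thesis using P1 P2 P3 by blast
qed


lemma asymp_all:
  fixes B K A c :: real
  shows "eventually (\<lambda>L::real.
     (2*L - 2*ln L - B) - K - L + 1 \<ge> L / 2 \<and>
     (2*L - 2*ln L + B) + ln (2*L - 2*ln L + B) + A - L + 1 \<le> 2 * L \<and>
     (2*L - 2*ln L - B) - c \<ge> L \<and>
     2 * (2*L - 2*ln L + B) \<le> 6 * L \<and>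
     L^3 / 2 - 6 * L \<ge> L^3 / 4 \<and>
     (2*L - 2*ln L - B)^2 / 2 - (K + 1) * (2*L - 2*ln L + B) - (2*L - 2*ln L + B) * ln (2*L - 2*ln L + B) - L - 2 * L^2 \<ge> - 10 * L * ln L \<and>
     ln (2*L - 2*ln L + B) + 1 + ((2*L - 2*ln L + B) + ln (2*L - 2*ln L + B) + A + 1)^2 / 2 + ln (6 * L) - 2 * L^2 \<le> 10 * L * ln L \<and>
     (2*L - 2*ln L - B) \<ge> K + 2 \<and>
     L / 2 - 1 \<ge> L / 4 \<and>
     L \<ge> 3) at_top"
  by (intro eventually_conj; real_asymp)

lemma alpha0_eq:
  assumes x: "ln x > 0"
  shows "alpha0 x * ln 2 = 2 * ln x - 2 * ln (ln x) + (2 * ln (ln 2) + 2 - ln 2)"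
proof -
  have l: "ln (2::real) > 0" by simp
  have h1: "log 2 (log 2 x) = (ln (ln x) - ln (ln 2)) / ln 2"
    using x l by (simp add: log_def ln_div)
  have h2: "log 2 (exp 1 / 2) = (1 - ln 2) / ln 2" by (simp add: log_def ln_div)
  have h3: "log 2 x = ln x / ln 2" by (simp add: log_def)
  have "alpha0 x = 2 * (ln x / ln 2) - 2 * ((ln (ln x) - ln (ln 2)) / ln 2) + 2 * ((1 - ln 2) / ln 2) + 1"
    unfolding alpha0_def by (subst h1, subst h2, subst h3, rule refl)
  then have "alpha0 x * ln 2 = (2 * (ln x / ln 2) - 2 * ((ln (ln x) - ln (ln 2)) / ln 2) + 2 * ((1 - ln 2) / ln 2) + 1) * ln 2"
    by simp
  also have "\<dots> = 2 * ln x - 2 * ln (ln x) + (2 * ln (ln 2) + 2 - ln 2)"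
    using l by (simp add: field_simps)
  finally show ?thesis .
qed

theorem corollary40:
  fixes t :: "nat \<Rightarrow> nat"
  assumes t_close: "\<exists>B. \<forall>\<^sub>F n in sequentially. \<bar>real (t n) - alpha0 (real n)\<bar> \<le> B"
  assumes c: "0 < c1" "c1 \<le> c2"
  shows "\<exists>a1 a2 b1 b2 C (N::nat). 0 < a1 \<and> 0 < a2 \<and> 0 < b1 \<and> 0 < b2 \<and>
     (\<forall>n\<ge>N. \<forall>k::real. 0 < k \<and> k \<le> real n / 2 \<and>
         c1 \<le> real (t n) - real n / k \<and> real (t n) - real n / k \<le> c2 \<longrightarrow>
       (\<exists>D. ((\<lambda>x. Lhat0 (real n) x (t n)) has_real_derivative D) (at k) \<and>
            a1 * ln (real n) ^ 3 / real n \<le> D \<and> D \<le> a2 * ln (real n) ^ 3 / real n) \<and>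
       (\<exists>D. ((\<lambda>x. Lhat0 x k (t n)) has_real_derivative D) (at (real n)) \<and>
            - b2 * ln (real n) ^ 2 / real n \<le> D \<and> D \<le> - b1 * ln (real n) ^ 2 / real n) \<and>
       (\<exists>D. ((\<lambda>x. L0 (real n) x (t n)) has_real_derivative D) (at k) \<and>
            abs (D - 2 / ln 2 * ln (real n) ^ 2) \<le> C * ln (real n) * ln (ln (real n))))"
proof -
  obtain B0 where ev0: "\<forall>\<^sub>F n in sequentially. \<bar>real (t n) - alpha0 (real n)\<bar> \<le> B0"
    using t_close by blast
  then obtain N0 where N0: "\<And>n. n \<ge> N0 \<Longrightarrow> \<bar>real (t n) - alpha0 (real n)\<bar> \<le> B0"
    unfolding eventually_sequentially by blast
  define K :: nat where "K = nat \<lceil>2 * c2\<rceil> + 1"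
  have K1: "K \<ge> 1" unfolding K_def by simp
  have K2: "c2 < real K / 2"
  proof -
    have "real (nat \<lceil>2 * c2\<rceil>) \<ge> 2 * c2" using c by linarith
    then show ?thesis unfolding K_def by simp
  qed
  define \<delta> :: real where "\<delta> = min (1/2) (c1 / 4)"
  have dl: "0 < \<delta>" "\<delta> \<le> 1/2" "2 * \<delta> < c1" unfolding \<delta>_def using c by auto
  define c0 :: real where "c0 = 2 * ln (ln 2) + 2 - ln 2"
  define B :: real where "B = \<bar>B0\<bar> + \<bar>c0\<bar>"
  obtain X where X: "\<And>L. L \<ge> X \<Longrightarrow>
     (2*L - 2*ln L - B) - 2 * real K - L + 1 \<ge> L / 2 \<and>
     (2*L - 2*ln L + B) + ln (2*L - 2*ln L + B) + (1 - ln \<delta>) - L + 1 \<le> 2 * L \<and>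
     (2*L - 2*ln L - B) - c2 \<ge> L \<and>
     2 * (2*L - 2*ln L + B) \<le> 6 * L \<and>
     L^3 / 2 - 6 * L \<ge> L^3 / 4 \<and>
     (2*L - 2*ln L - B)^2 / 2 - (2 * real K + 1) * (2*L - 2*ln L + B) - (2*L - 2*ln L + B) * ln (2*L - 2*ln L + B) - L - 2 * L^2 \<ge> - 10 * L * ln L \<and>
     ln (2*L - 2*ln L + B) + 1 + ((2*L - 2*ln L + B) + ln (2*L - 2*ln L + B) + (1 - ln \<delta>) + 1)^2 / 2 + ln (6 * L) - 2 * L^2 \<le> 10 * L * ln L \<and>
     (2*L - 2*ln L - B) \<ge> 2 * real K + 2 \<and>
     L / 2 - 1 \<ge> L / 4 \<and>
     L \<ge> 3"
    using asymp_all[of B "2 * real K" "1 - ln \<delta>" c2] unfolding eventually_at_top_linorder by blast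
  define N :: nat where "N = max N0 (nat \<lceil>exp X\<rceil>)"
  have main: "\<forall>n\<ge>N. \<forall>k::real. 0 < k \<and> k \<le> real n / 2 \<and>
         c1 \<le> real (t n) - real n / k \<and> real (t n) - real n / k \<le> c2 \<longrightarrow>
       (\<exists>D. ((\<lambda>x. Lhat0 (real n) x (t n)) has_real_derivative D) (at k) \<and>
            1/4 * ln (real n) ^ 3 / real n \<le> D \<and> D \<le> 72 * ln (real n) ^ 3 / real n) \<and>
       (\<exists>D. ((\<lambda>x. Lhat0 x k (t n)) has_real_derivative D) (at (real n)) \<and>
            - 12 * ln (real n) ^ 2 / real n \<le> D \<and> D \<le> - (1/4) * ln (real n) ^ 2 / real n) \<and>
       (\<exists>D. ((\<lambda>x. L0 (real n) x (t n)) has_real_derivative D) (at k) \<and>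
            abs (D - 2 / ln 2 * ln (real n) ^ 2) \<le> 10 / ln 2 * ln (real n) * ln (ln (real n)))"
  proof (intro allI impI)
    fix n :: nat and k :: real
    assume nN: "n \<ge> N"
    assume hk: "0 < k \<and> k \<le> real n / 2 \<and> c1 \<le> real (t n) - real n / k \<and> real (t n) - real n / k \<le> c2"
    have nX: "real n \<ge> exp X" using nN unfolding N_def by linarith
    have npos: "real n > 0" using nX exp_gt_zero[of X] by linarith
    have LX: "ln (real n) \<ge> X" using nX npos by (metis exp_le_cancel_iff exp_ln)
    note R = X[OF LX]
    have Lpos: "ln (real n) > 0" using R by linarith
    have tb: "\<bar>real (t n) - alpha0 (real n)\<bar> \<le> B0" using N0 nN unfolding N_def by simp
    have tau: "\<bar>real (t n) * ln 2 - (2 * ln (real n) - 2 * ln (ln (real n)))\<bar> \<le> B"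
    proof -
      have "real (t n) * ln 2 - (2 * ln (real n) - 2 * ln (ln (real n))) = (real (t n) - alpha0 (real n)) * ln 2 + c0"
        using alpha0_eq[of "real n"] Lpos unfolding c0_def by (simp add: algebra_simps)
      moreover have "\<bar>(real (t n) - alpha0 (real n)) * ln 2\<bar> \<le> \<bar>B0\<bar>"
      proof -
        have "\<bar>(real (t n) - alpha0 (real n)) * ln 2\<bar> = \<bar>real (t n) - alpha0 (real n)\<bar> * ln 2"
          by (simp add: abs_mult)
        also have "\<dots> \<le> \<bar>real (t n) - alpha0 (real n)\<bar> * 1"
          using ln_2_less_1 by (intro mult_left_mono) auto
        also have "\<dots> \<le> B0" using tb by simp
        also have "\<dots> \<le> \<bar>B0\<bar>" by simp
        finally show ?thesis .
      qed
      ultimately show ?thesis unfolding B_def by linarith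
    qed
    show "(\<exists>D. ((\<lambda>x. Lhat0 (real n) x (t n)) has_real_derivative D) (at k) \<and>
            1/4 * ln (real n) ^ 3 / real n \<le> D \<and> D \<le> 72 * ln (real n) ^ 3 / real n) \<and>
       (\<exists>D. ((\<lambda>x. Lhat0 x k (t n)) has_real_derivative D) (at (real n)) \<and>
            - 12 * ln (real n) ^ 2 / real n \<le> D \<and> D \<le> - (1/4) * ln (real n) ^ 2 / real n) \<and>
       (\<exists>D. ((\<lambda>x. L0 (real n) x (t n)) has_real_derivative D) (at k) \<and>
            abs (D - 2 / ln 2 * ln (real n) ^ 2) \<le> 10 / ln 2 * ln (real n) * ln (ln (real n)))"
      by (rule core[where n="real n" and k=k and L="ln (real n)"
            and tm="2 * ln (real n) - 2 * ln (ln (real n)) - B"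
            and tp="2 * ln (real n) - 2 * ln (ln (real n)) + B"
            and T="t n" and B=B and ca=c1 and cb=c2 and K=K and \<delta>=\<delta>])
         (use npos hk tau R K1 K2 dl in auto)
  qed
  show ?thesis
    apply (rule exI[of _ "1/4"], rule exI[of _ 72], rule exI[of _ "1/4"], rule exI[of _ 12],
        rule exI[of _ "10 / ln 2"], rule exI[of _ N])
    using main by simp
qed

end
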